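(* Let $S_{1,n-3}$ be the tree with vertices $v_0,v_1,\dots,v_{n-1}$ and edges $e_1=\{v_0,v_1\}$, $e_2=\{v_1,v_2\}$, $e_i=\{v_2,v_i\}$ for $3\le i\le n-1$. Let $B_1=\{e_1,\dots,e_{n-1},f_1,f_2\}$ with $f_1=\{v_0,v_2\}$, $f_2=\{v_1,v_3\}$, and $B_2=\{e_1,\dots,e_{n-1},f_1,f_2\}$ with $f_1=\{v_0,v_2\}$, $f_2=\{v_3,v_4\}$. Then: (1) the eigenvalues of $\mathfrak{D}_2(S_{1,n-3})[B_1,B_1]$ are $-1$ with multiplicity $n-5$ and the roots of $h_1(x)=x^6-2(n-1)x^5-3(7n-12)x^4-18(3n-7)x^3-5(9n-22)x^2-(13n-28)x-(n-1)$; (2) the eigenvalues of $\mathfrak{D}_2(S_{1,n-3})[B_2,B_2]$ are $-1$ with multiplicity $n-5$ and the roots of $h_2(x)=x^6-2(n-1)x^5-(21n-22)x^4-(62n-141)x^3-(53n-133)x^2-(15n-34)x-(n-1)$.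
   Context: For a tree $T$, let $\mathcal{V}_2$ be the set of 2-element vertex subsets (edges regarded as elements of $\mathcal{V}_2$). The 2-Steiner distance matrix $\mathfrak{D}_2(T)$ is indexed by $\mathcal{V}_2$, with entry in row $\{i,j\}$, column $\{k,l\}$ equal to the minimum number of edges of a connected subtree of $T$ whose vertex set contains $i,j,k,l$. $M[B,B]$ denotes the principal submatrix with rows and columns indexed by $B$. *)

theory Defs
  imports "Jordan_Normal_Form.Char_Poly"
begin

text \<open>A graph is given by its edge set, each edge a 2-element set of vertices.\<close>

definition edge_rel :: "'v set set \<Rightarrow> ('v \<times> 'v) set" where
  "edge_rel F = {(u, v). {u, v} \<in> F}"

definition connected_with :: "'v set set \<Rightarrow> 'v set \<Rightarrow> bool" where
  "connected_with F S \<longleftrightarrow>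
     (\<forall>u \<in> \<Union>F \<union> S. \<forall>v \<in> \<Union>F \<union> S. (u, v) \<in> (edge_rel F)\<^sup>*)"

definition steiner_dist :: "'v set set \<Rightarrow> 'v set \<Rightarrow> nat" where
  "steiner_dist E S = (LEAST k. \<exists>F \<subseteq> E. card F = k \<and> connected_with F S)"

text \<open>Entry of the 2-Steiner distance matrix in row {i,j}, column {k,l}.\<close>

definition steiner2 :: "'v set set \<Rightarrow> 'v set \<Rightarrow> 'v set \<Rightarrow> nat" where
  "steiner2 E p q = steiner_dist E (p \<union> q)"

text \<open>Principal submatrix of the 2-Steiner distance matrix with rows/columns
  indexed by the elements of B, listed (without repetition) in the list bs.\<close>

definition steiner2_submatrix :: "'v set set \<Rightarrow> 'v set list \<Rightarrow> real mat" where
  "steiner2_submatrix E bs =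
     mat (length bs) (length bs) (\<lambda>(i, j). real (steiner2 E (bs ! i) (bs ! j)))"

text \<open>The tree S_{1,n-3} on vertices 0..n-1 (v_i = i):
  e_1 = {0,1}, e_2 = {1,2}, e_i = {2,i} for 3 <= i <= n-1.\<close>

definition tree_edge :: "nat \<Rightarrow> nat set" where
  "tree_edge i = (if i = 1 then {0, 1} else if i = 2 then {1, 2} else {2, i})"

definition S1 :: "nat \<Rightarrow> nat set set" where
  "S1 n = tree_edge ` {1..n - 1}"

definition B1_list :: "nat \<Rightarrow> nat set list" where
  "B1_list n = map tree_edge [1..<n] @ [{0, 2}, {1, 3}]"

definition B2_list :: "nat \<Rightarrow> nat set list" where
  "B2_list n = map tree_edge [1..<n] @ [{0, 2}, {3, 4}]"

definition h1 :: "nat \<Rightarrow> real poly" where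
  "h1 n = [: -(real n - 1), -(13 * real n - 28), -5 * (9 * real n - 22),
             -18 * (3 * real n - 7), -3 * (7 * real n - 12), -2 * (real n - 1), 1 :]"

definition h2 :: "nat \<Rightarrow> real poly" where
  "h2 n = [: -(real n - 1), -(15 * real n - 34), -(53 * real n - 133),
             -(62 * real n - 141), -(21 * real n - 22), -2 * (real n - 1), 1 :]"

end

theory Submission
  imports Defs
begin


definition sc :: "nat set \<Rightarrow> nat" where
  "sc U = (if 0 \<in> U then 1 else 0) + (if (0 \<in> U \<or> 1 \<in> U) \<and> (\<exists>v\<in>U. 2 \<le> v) then 1 else 0)
          + card (U \<inter> {3..})"

definition req :: "nat set \<Rightarrow> nat set set" where
  "req U = (if 0 \<in> U then {{0,1}} else {}) \<union> (if (0 \<in> U \<or> 1 \<in> U) \<and> (\<exists>v\<in>U. 2 \<le> v) then {{1,2}} else {})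
          \<union> (\<lambda>i. {2,i}) ` (U \<inter> {3..})"

lemma edge_rel_iff[simp]: "(a,b) \<in> edge_rel F \<longleftrightarrow> {a,b} \<in> F"
  by (simp add: edge_rel_def)

lemma sym_edge_rel: "sym (edge_rel F)"
  by (auto simp: sym_def edge_rel_def insert_commute)

lemma rtrancl_cut:
  assumes "(u,v) \<in> (edge_rel F)\<^sup>*" "u \<in> X" "v \<notin> X"
  shows "\<exists>a b. {a,b} \<in> F \<and> a \<in> X \<and> b \<notin> X"
  using assms
proof (induction rule: rtrancl_induct)
  case base
  then show ?case by simp
next
  case (step y z)
  show ?case
  proof (cases "y \<in> X")
    case True
    then show ?thesis using step by auto
  next
    case False
    then show ?thesis using step by auto
  qed
qed

lemma conn_cut:
  assumes "connected_with F U" "u \<in> U" "v \<in> U" "u \<in> X" "v \<notin> X"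
  shows "\<exists>a b. {a,b} \<in> F \<and> a \<in> X \<and> b \<notin> X"
  using assms rtrancl_cut[of u v F X] unfolding connected_with_def by blast

lemma S1_cases:
  assumes "e \<in> S1 n"
  shows "e = {0,1} \<or> e = {1,2} \<or> (\<exists>i. 3 \<le> i \<and> i < n \<and> e = {2,i})"
proof -
  obtain j where j: "j \<in> {1..n-1}" "e = tree_edge j" using assms unfolding S1_def by auto
  show ?thesis
  proof (cases "j = 1 \<or> j = 2")
    case True
    then show ?thesis using j by (auto simp: tree_edge_def)
  next
    case False
    hence "3 \<le> j" "j < n" "e = {2,j}" using j by (auto simp: tree_edge_def)
    then show ?thesis by blast
  qed
qed

lemma S1_mem:
  assumes "3 \<le> n"
  shows "{0,1} \<in> S1 n" "{1,2} \<in> S1 n" "\<And>i. 3 \<le> i \<Longrightarrow> i < n \<Longrightarrow> {2,i} \<in> S1 n"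
proof -
  show "{0,1} \<in> S1 n" unfolding S1_def using assms by (auto simp: tree_edge_def image_iff intro!: bexI[of _ 1])
  show "{1,2} \<in> S1 n" unfolding S1_def using assms by (auto simp: tree_edge_def image_iff intro!: bexI[of _ 2])
  fix i assume "3 \<le> i" "i < n"
  then show "{2,i} \<in> S1 n" unfolding S1_def by (auto simp: tree_edge_def image_iff intro!: bexI[of _ i])
qed

lemma finite_S1: "finite (S1 n)" unfolding S1_def by simp

lemma req_sub:
  assumes "3 \<le> n" "U \<subseteq> {0..<n}"
  shows "req U \<subseteq> S1 n"
  using assms S1_mem[OF assms(1)] unfolding req_def by auto

lemma card_req:
  assumes "finite U"
  shows "card (req U) = sc U"
proof -
  define A where "A = (if 0 \<in> U then {{0,1}} else {}) \<union> (if (0 \<in> U \<or> 1 \<in> U) \<and> (\<exists>v\<in>U. 2 \<le> v) then {{1,2::nat}} else {})"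
  define C where "C = (\<lambda>i. {2,i}) ` (U \<inter> {3::nat..})"
  have inj: "inj_on (\<lambda>i. {2::nat,i}) (U \<inter> {3..})"
    by (rule inj_onI) (auto simp: doubleton_eq_iff)
  have cC: "card C = card (U \<inter> {3..})" unfolding C_def by (rule card_image[OF inj])
  have cA: "card A = (if 0 \<in> U then 1 else 0) + (if (0 \<in> U \<or> 1 \<in> U) \<and> (\<exists>v\<in>U. 2 \<le> v) then 1 else 0)"
  proof -
    have "(0::nat) \<in> {0,1}" "(0::nat) \<notin> {1,2}" by auto
    hence ne: "{1,2::nat} \<noteq> {0,1}" by blast
    show ?thesis
    unfolding A_def using ne by (cases "0 \<in> U"; cases "(0 \<in> U \<or> 1 \<in> U) \<and> (\<exists>v\<in>U. 2 \<le> v)") simp_all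
  qed
  have A3: "\<forall>x\<in>A. \<forall>y\<in>x. y < 3" unfolding A_def by auto
  have C3: "\<forall>x\<in>C. \<exists>y\<in>x. 3 \<le> y" unfolding C_def by auto
  have disj: "A \<inter> C = {}" using A3 C3 by fastforce
  have "req U = A \<union> C" unfolding req_def A_def C_def by auto
  hence "card (req U) = card A + card C"
    using disj assms by (simp add: card_Un_disjoint A_def C_def)
  then show ?thesis using cA cC unfolding sc_def by simp
qed

lemma S1_cases':
  assumes "{a,b} \<in> S1 n"
  obtains "{a,b} = {0,1}" | "{a,b} = {1,2}" | i where "3 \<le> i" "{a,b} = {2,i}"
  using S1_cases[OF assms] by metis

lemma other_elem:
  assumes "u \<in> U" "v \<in> U" "u \<noteq> v"
  shows "\<exists>w. w \<in> U \<and> w \<noteq> x"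
proof (cases "u = x")
  case True then show ?thesis using assms by metis
next
  case False then show ?thesis using assms by metis
qed

lemma req_lower:
  assumes n: "3 \<le> n" and U: "U \<subseteq> {0..<n}" and uv: "u \<in> U" "v \<in> U" "u \<noteq> v"
    and F: "F \<subseteq> S1 n" and c: "connected_with F U"
  shows "req U \<subseteq> F"
proof
  fix e assume e: "e \<in> req U"
  show "e \<in> F"
  proof -
    have c0: "{0,1} \<in> F" if h: "0 \<in> U"
    proof -
      obtain w where w: "w \<in> U" "w \<noteq> 0" using other_elem[OF uv] by metis
      obtain a b where ab: "{a,b} \<in> F" "a \<in> {0}" "b \<notin> {0}" using conn_cut[OF c h w(1), of "{0}"] w by auto
      have h0: "0 \<in> {a,b}" using ab by simp
      have "{a,b} \<in> S1 n" using F ab(1) by (rule subsetD)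
      then consider "{a,b} = {0,1}" | "{a,b} = {1,2}" | i where "3 \<le> i" "{a,b} = {2,i}" by (rule S1_cases')
      then have "{a,b} = {0,1}"
      proof cases
        case 2 then show ?thesis using h0 by simp
      next
        case 3 then show ?thesis using h0 by simp
      qed
      then show ?thesis using ab(1) by simp
    qed
    have c1: "{1,2} \<in> F" if h: "0 \<in> U \<or> 1 \<in> U" "\<exists>v\<in>U. 2 \<le> v"
    proof -
      obtain w where w: "w \<in> U" "w \<in> {0,1}" using h by auto
      obtain z where z: "z \<in> U" "z \<notin> {0,1}" using h by force
      obtain a b where ab: "{a,b} \<in> F" "a \<in> {0,1}" "b \<notin> {0,1}" using conn_cut[OF c w(1) z(1) w(2) z(2)] by auto
      have "{a,b} \<in> S1 n" using F ab(1) by (rule subsetD)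
      then consider "{a,b} = {0,1}" | "{a,b} = {1,2}" | i where "3 \<le> i" "{a,b} = {2,i}" by (rule S1_cases')
      then have "{a,b} = {1,2}"
      proof cases
        case 1
        then have "b \<in> {0,1}" by auto
        then show ?thesis using ab(3) by simp
      next
        case 3
        then have "a \<in> {2,i}" by auto
        then show ?thesis using ab(2) 3(1) by auto
      qed
      then show ?thesis using ab(1) by simp
    qed
    have c2: "{2,i} \<in> F" if h: "i \<in> U" "3 \<le> i" for i
    proof -
      obtain w where w: "w \<in> U" "w \<noteq> i" using other_elem[OF uv] by metis
      obtain a b where ab: "{a,b} \<in> F" "a \<in> {i}" "b \<notin> {i}" using conn_cut[OF c h(1) w(1), of "{i}"] w by auto
      have ia: "i \<in> {a,b}" using ab by simp
      have "{a,b} \<in> S1 n" using F ab(1) by (rule subsetD)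
      then consider "{a,b} = {0,1}" | "{a,b} = {1,2}" | j where "3 \<le> j" "{a,b} = {2,j}" by (rule S1_cases')
      then have "{a,b} = {2,i}"
      proof cases
        case 1 then show ?thesis using ia h(2) by simp
      next
        case 2 then show ?thesis using ia h(2) by simp
      next
        case 3
        then have "i \<in> {2,j}" using ia by simp
        hence "i = j" using h(2) by auto
        then show ?thesis using 3 by simp
      qed
      then show ?thesis using ab(1) by simp
    qed
    have "e \<in> (if 0 \<in> U then {{0,1}} else {}) \<or> e \<in> (if (0 \<in> U \<or> 1 \<in> U) \<and> (\<exists>v\<in>U. 2 \<le> v) then {{1,2}} else {})
          \<or> e \<in> (\<lambda>i. {2,i}) ` (U \<inter> {3..})" using e unfolding req_def by (simp only: Un_iff disj_assoc)
    then show ?thesis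
    proof (elim disjE)
      assume h: "e \<in> (if 0 \<in> U then {{0,1}} else {})"
      show ?thesis proof (cases "0 \<in> U")
        case True then show ?thesis using h c0 by simp
      next
        case False then show ?thesis using h by (subst (asm) if_not_P[OF False]) simp
      qed
    next
      assume h: "e \<in> (if (0 \<in> U \<or> 1 \<in> U) \<and> (\<exists>v\<in>U. 2 \<le> v) then {{1,2}} else {})"
      show ?thesis proof (cases "(0 \<in> U \<or> 1 \<in> U) \<and> (\<exists>v\<in>U. 2 \<le> v)")
        case True then show ?thesis using h c1 by simp
      next
        case False then show ?thesis using h by (subst (asm) if_not_P[OF False]) simp
      qed
    next
      assume "e \<in> (\<lambda>i. {2,i}) ` (U \<inter> {3..})"
      then obtain i where "i \<in> U" "3 \<le> i" "e = {2,i}" by auto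
      then show ?thesis using c2 by simp
    qed
  qed
qed

lemma req_conn:
  assumes U: "U \<subseteq> {0..<n}" and uv: "u \<in> U" "v \<in> U" "u \<noteq> v"
  shows "connected_with (req U) U"
proof -
  let ?R = "edge_rel (req U)"
  have symR: "sym (?R\<^sup>*)" by (rule sym_rtrancl[OF sym_edge_rel])
  show ?thesis
  proof (cases "\<exists>v\<in>U. 2 \<le> v")
    case hv: True
    have to2: "(w, 2) \<in> ?R\<^sup>*" if w: "w \<in> \<Union>(req U) \<union> U" for w
    proof -
      have "w = 2 \<or> w = 1 \<or> w = 0 \<or> 3 \<le> w" by auto
      moreover
      { assume "w = 1"
        hence "0 \<in> U \<or> 1 \<in> U" using w unfolding req_def by (auto split: if_splits)
        hence "{1,2} \<in> req U" using hv unfolding req_def by auto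
        hence "(w,2) \<in> ?R\<^sup>*" using \<open>w = 1\<close> by auto }
      moreover
      { assume "w = 0"
        hence "0 \<in> U" using w unfolding req_def by (auto split: if_splits)
        hence "{0,1} \<in> req U" "{1,2} \<in> req U" using hv unfolding req_def by auto
        hence "(w,2) \<in> ?R\<^sup>*" using \<open>w = 0\<close>
          by (meson converse_rtrancl_into_rtrancl edge_rel_iff r_into_rtrancl) }
      moreover
      { assume w3: "3 \<le> w"
        hence "w \<in> U" using w unfolding req_def by (auto split: if_splits)
        hence "{2,w} \<in> req U" using w3 unfolding req_def by auto
        hence "(w,2) \<in> ?R\<^sup>*" by (auto simp: insert_commute) }
      ultimately show ?thesis by auto
    qed
    show ?thesis unfolding connected_with_def
    proof (intro ballI)
      fix a b assume a: "a \<in> \<Union>(req U) \<union> U" and b: "b \<in> \<Union>(req U) \<union> U"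
      have "(b,2) \<in> ?R\<^sup>*" by (rule to2[OF b])
      hence "(2,b) \<in> ?R\<^sup>*" using symR by (auto simp: sym_def)
      then show "(a,b) \<in> ?R\<^sup>*" using to2[OF a] by (rule rtrancl_trans[rotated])
    qed
  next
    case False
    hence "U \<subseteq> {0,1}" by force
    hence U01: "U = {0,1}" using uv by auto
    hence rq: "req U = {{0,1}}" unfolding req_def by auto
    have "(0,1) \<in> ?R" "(1,0) \<in> ?R" using rq by (auto simp: insert_commute)
    moreover have W: "\<Union>(req U) \<union> U = {0,1}" using rq U01 by auto
    ultimately show ?thesis unfolding connected_with_def W by auto
  qed
qed

lemma steiner_S1:
  assumes n: "3 \<le> n" and U: "U \<subseteq> {0..<n}" and uv: "u \<in> U" "v \<in> U" "u \<noteq> v"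
  shows "steiner_dist (S1 n) U = sc U"
proof -
  have fU: "finite U" using U finite_subset by blast
  show ?thesis unfolding steiner_dist_def
  proof (rule Least_equality)
    show "\<exists>F\<subseteq>S1 n. card F = sc U \<and> connected_with F U"
      using req_sub[OF n U] card_req[OF fU] req_conn[OF U uv] by blast
  next
    fix k assume "\<exists>F\<subseteq>S1 n. card F = k \<and> connected_with F U"
    then obtain F where F: "F \<subseteq> S1 n" "card F = k" "connected_with F U" by blast
    have "finite F" using F(1) finite_S1 finite_subset by blast
    then have "card (req U) \<le> card F" using req_lower[OF n U uv F(1) F(3)] card_mono by blast
    then show "sc U \<le> k" using card_req[OF fU] F(2) by simp
  qed
qed




lemma det_perm_sim:
  fixes f :: "nat \<Rightarrow> nat \<Rightarrow> 'a::comm_ring_1"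
  assumes p: "p permutes {0..<N}"
  shows "det (mat N N (\<lambda>(i,j). f (p i) (p j))) = det (mat N N (\<lambda>(i,j). f i j))"
proof -
  have pN: "\<And>i. i < N \<Longrightarrow> p i < N" using p permutes_in_image by fastforce
  define A where "A = mat N N (\<lambda>(i,j). f i (p j))"
  have A: "A \<in> carrier_mat N N" unfolding A_def by simp
  have 1: "mat N N (\<lambda>(i,j). f (p i) (p j)) = mat N N (\<lambda>(i,j). A $$ (p i, j))"
    by (rule eq_matI) (auto simp: A_def pN)
  have 2: "det (mat N N (\<lambda>(i,j). A $$ (p i, j))) = signof p * det A"
    by (rule det_permute_rows[OF A p])
  define B where "B = mat N N (\<lambda>(i,j). f j i)"
  have B: "B \<in> carrier_mat N N" unfolding B_def by simp
  have 3: "transpose_mat A = mat N N (\<lambda>(i,j). B $$ (p i, j))"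
    by (rule eq_matI) (auto simp: A_def B_def pN)
  have "det A = det (transpose_mat A)" using det_transpose[OF A] by simp
  also have "\<dots> = signof p * det B" unfolding 3 by (rule det_permute_rows[OF B p])
  also have "det B = det (transpose_mat (mat N N (\<lambda>(i,j). f i j)))"
    by (rule arg_cong[where f=det], rule eq_matI) (auto simp: B_def)
  also have "\<dots> = det (mat N N (\<lambda>(i,j). f i j))" by (rule det_transpose[of _ N]) simp
  finally have "det A = signof p * det (mat N N (\<lambda>(i,j). f i j))" .
  moreover have "signof p * signof p = (1::'a)"
    by (cases "sign p = 1") (auto simp: sign_def)
  ultimately show ?thesis using 1 2 by (simp add: mult.assoc[symmetric])
qed

lemma reduce_generic:
  fixes d :: "nat \<Rightarrow> nat \<Rightarrow> 'a::idom"
  assumes s0: "s0 < c"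
  and gg: "\<And>t u. t < g \<Longrightarrow> u < g \<Longrightarrow> d t u = (if t = u then a else b)"
  and gs1: "\<And>t. t < g \<Longrightarrow> d t (g+s0) = b"
  and gs2: "\<And>t. t < g \<Longrightarrow> d (g+s0) t = b"
  and ss: "d (g+s0) (g+s0) = a"
  and gc1: "\<And>t u. t < g \<Longrightarrow> u < c \<Longrightarrow> u \<noteq> s0 \<Longrightarrow> d t (g+u) = d (g+s0) (g+u)"
  and gc2: "\<And>t u. t < g \<Longrightarrow> u < c \<Longrightarrow> u \<noteq> s0 \<Longrightarrow> d (g+u) t = d (g+u) (g+s0)"
  shows "det (mat (g+c) (g+c) (\<lambda>(i,j). d i j)) = (a-b)^g *
     det (mat c c (\<lambda>(t,u). if u = s0 then (if t = s0 then a + of_nat g * b else (of_nat g + 1) * d (g+t) (g+s0))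
                              else d (g+t) (g+u)))"
proof -
  define N where "N = g + c"
  define s where "s = g + s0"
  have sN: "s < N" "g \<le> s" using s0 unfolding N_def s_def by auto
  define D where "D = mat N N (\<lambda>(i,j). d i j)"
  define L where "L = mat N N (\<lambda>(i,j). (if i = j then 1 else 0) - (if i < g \<and> j = s then 1 else (0::'a)))"
  define R where "R = mat N N (\<lambda>(i,j). (if i = j then 1 else 0) + (if i < g \<and> j = s then 1 else (0::'a)))"
  have D: "D \<in> carrier_mat N N" and L: "L \<in> carrier_mat N N" and R: "R \<in> carrier_mat N N"
    unfolding D_def L_def R_def by auto
  have diagL: "diag_mat L = replicate N 1"
    by (rule nth_equalityI) (auto simp: diag_mat_def L_def s_def)
  have diagR: "diag_mat R = replicate N 1"
    by (rule nth_equalityI) (auto simp: diag_mat_def R_def s_def)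
  have "det L = prod_list (diag_mat L)"
    by (rule det_upper_triangular[OF _ L]) (auto simp: upper_triangular_def L_def s_def)
  hence detL: "det L = 1" by (simp add: diagL)
  have "det R = prod_list (diag_mat R)"
    by (rule det_upper_triangular[OF _ R]) (auto simp: upper_triangular_def R_def s_def)
  hence detR: "det R = 1" by (simp add: diagR)
  have LD: "(L * D) $$ (i,j) = d i j - (if i < g then d s j else 0)" if "i < N" "j < N" for i j
  proof -
    have "(L * D) $$ (i,j) = (\<Sum>k\<in>{0..<N}. ((if i = k then 1 else 0) - (if i < g \<and> k = s then 1 else 0)) * d k j)"
      using that L D by (simp add: L_def D_def scalar_prod_def)
    also have "\<dots> = (\<Sum>k\<in>{0..<N}. (if i = k then d k j else 0) - (if i < g \<and> k = s then d k j else 0))"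
      by (rule sum.cong) auto
    also have "\<dots> = (\<Sum>k\<in>{0..<N}. (if i = k then d k j else 0)) - (\<Sum>k\<in>{0..<N}. (if i < g \<and> k = s then d k j else 0))"
      by (rule sum_subtractf)
    also have "\<dots> = d i j - (if i < g then d s j else 0)"
      using that sN by (simp add: sum.delta)
    finally show ?thesis .
  qed
  define C where "C = L * D * R"
  have C: "C \<in> carrier_mat N N" unfolding C_def using L D R by auto
  have CE: "C $$ (i,j) = (L*D) $$ (i,j) + (if j = s then (\<Sum>k\<in>{0..<g}. (L*D) $$ (i,k)) else 0)" if "i < N" "j < N" for i j
  proof -
    have LDc: "L * D \<in> carrier_mat N N" using L D by auto
    have "C $$ (i,j) = (\<Sum>k\<in>{0..<N}. (L*D) $$ (i,k) * ((if k = j then 1 else 0) + (if k < g \<and> j = s then 1 else 0)))"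
    proof -
      have dims: "dim_row (L*D) = N" "dim_col (L*D) = N" "dim_row R = N" "dim_col R = N" using LDc R by auto
      have "C $$ (i,j) = (\<Sum>k\<in>{0..<N}. (L*D) $$ (i,k) * R $$ (k,j))"
        using that dims unfolding C_def by (simp add: scalar_prod_def)
      also have "\<dots> = (\<Sum>k\<in>{0..<N}. (L*D) $$ (i,k) * ((if k = j then 1 else 0) + (if k < g \<and> j = s then 1 else 0)))"
        by (rule sum.cong) (auto simp: R_def that)
      finally show ?thesis .
    qed
    also have "\<dots> = (\<Sum>k\<in>{0..<N}. (if k = j then (L*D) $$ (i,k) else 0) + (if k < g \<and> j = s then (L*D) $$ (i,k) else 0))"
      by (rule sum.cong) auto
    also have "\<dots> = (\<Sum>k\<in>{0..<N}. (if k = j then (L*D) $$ (i,k) else 0)) + (\<Sum>k\<in>{0..<N}. (if k < g \<and> j = s then (L*D) $$ (i,k) else 0))"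
      by (rule sum.distrib)
    also have "(\<Sum>k\<in>{0..<N}. (if k = j then (L*D) $$ (i,k) else 0)) = (L*D) $$ (i,j)"
      using that by (simp add: sum.delta')
    also have "(\<Sum>k\<in>{0..<N}. (if k < g \<and> j = s then (L*D) $$ (i,k) else 0)) = (if j = s then (\<Sum>k\<in>{0..<g}. (L*D) $$ (i,k)) else 0)"
    proof (cases "j = s")
      case True
      have "(\<Sum>k\<in>{0..<N}. (if k < g then (L*D) $$ (i,k) else 0)) = (\<Sum>k\<in>{0..<N} \<inter> {k. k < g}. (L*D) $$ (i,k))"
        by (simp add: sum.inter_restrict)
      also have "{0..<N} \<inter> {k. k < g} = {0..<g}" using sN by auto
      finally show ?thesis using True by simp
    qed simp
    finally show ?thesis .
  qed
  define C4 where "C4 = mat c c (\<lambda>(t,u). if u = s0 then (if t = s0 then a + of_nat g * b else (of_nat g + 1) * d (g+t) (g+s0))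
                              else d (g+t) (g+u))"
  define C1 where "C1 = (a - b) \<cdot>\<^sub>m (1\<^sub>m g)"
  define C3 where "C3 = mat c g (\<lambda>(t,u). C $$ (g+t, u))"
  have Cblock: "C = four_block_mat C1 (0\<^sub>m g c) C3 C4"
  proof (rule eq_matI)
    show "dim_row C = dim_row (four_block_mat C1 (0\<^sub>m g c) C3 C4)" using C by (simp add: C1_def C4_def N_def)
    show "dim_col C = dim_col (four_block_mat C1 (0\<^sub>m g c) C3 C4)" using C by (simp add: C1_def C4_def N_def)
    fix i j assume i: "i < dim_row (four_block_mat C1 (0\<^sub>m g c) C3 C4)" and j: "j < dim_col (four_block_mat C1 (0\<^sub>m g c) C3 C4)"
    hence iN: "i < N" and jN: "j < N" by (auto simp: C1_def C4_def N_def)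
    show "C $$ (i,j) = four_block_mat C1 (0\<^sub>m g c) C3 C4 $$ (i,j)"
    proof (cases "i < g")
      case ig: True
      have sumg: "(\<Sum>k\<in>{0..<g}. (L*D) $$ (i,k)) = a - b"
      proof -
        have "(\<Sum>k\<in>{0..<g}. (L*D) $$ (i,k)) = (\<Sum>k\<in>{0..<g}. if k = i then a - b else 0)"
        proof (rule sum.cong)
          fix k assume k: "k \<in> {0..<g}"
          hence "k < N" using sN by auto
          then show "(L*D) $$ (i,k) = (if k = i then a - b else 0)"
            using LD[OF iN] k ig gg gs2 unfolding s_def by auto
        qed simp
        also have "\<dots> = a - b" using ig by (simp add: sum.delta')
        finally show ?thesis .
      qed
      have "C $$ (i,j) = (if j < g then (if i = j then a - b else 0) else 0)"
      proof (cases "j < g")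
        case True
        then show ?thesis using CE[OF iN jN] LD[OF iN jN] ig gg gs2 sN unfolding s_def by auto
      next
        case False
        then obtain u where u: "j = g + u" "u < c" using jN unfolding N_def by (metis add_diff_inverse_nat add_less_imp_less_left)
        show ?thesis
        proof (cases "u = s0")
          case True
          then show ?thesis using CE[OF iN jN] LD[OF iN jN] ig u gs1 ss sumg unfolding s_def by auto
        next
          case False
          then show ?thesis using CE[OF iN jN] LD[OF iN jN] ig u gc1 unfolding s_def by auto
        qed
      qed
      then show ?thesis using ig jN by (auto simp: four_block_mat_def C1_def C4_def Let_def N_def)
    next
      case ig: False
      then obtain t where t: "i = g + t" "t < c" using iN unfolding N_def by (metis add_diff_inverse_nat add_less_imp_less_left)
      show ?thesis
      proof (cases "j < g")
        case True
        then show ?thesis using ig t by (auto simp: four_block_mat_def C1_def C3_def C4_def Let_def)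
      next
        case False
        then obtain u where u: "j = g + u" "u < c" using jN unfolding N_def by (metis add_diff_inverse_nat add_less_imp_less_left)
        have LDi: "\<And>k. k < N \<Longrightarrow> (L*D) $$ (i,k) = d i k" using LD[OF iN] ig by auto
        have "C $$ (i,j) = C4 $$ (t,u)"
        proof (cases "u = s0")
          case True
          have "(\<Sum>k\<in>{0..<g}. (L*D) $$ (i,k)) = (\<Sum>k\<in>{0..<g}. (if t = s0 then b else d i s))"
          proof (rule sum.cong)
            fix k assume k: "k \<in> {0..<g}"
            hence "k < N" using sN by auto
            then show "(L*D) $$ (i,k) = (if t = s0 then b else d i s)" using LDi k t gs2 gc2 unfolding s_def by (cases "t = s0") auto
          qed simp
          also have "\<dots> = of_nat g * (if t = s0 then b else d i s)" by simp
          finally have sm: "(\<Sum>k\<in>{0..<g}. (L*D) $$ (i,k)) = of_nat g * (if t = s0 then b else d i s)" .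
          show ?thesis using CE[OF iN jN] LDi[OF jN] sm True t u unfolding C4_def s_def
            by (cases "t = s0") (auto simp: ss algebra_simps)
        next
          case False
          then show ?thesis using CE[OF iN jN] LDi[OF jN] t u unfolding C4_def s_def by auto
        qed
        then show ?thesis using ig t u by (auto simp: four_block_mat_def C1_def C3_def C4_def Let_def)
      qed
    qed
  qed
  have "det D = det C"
    unfolding C_def using det_mult[OF _ R, of "L*D"] det_mult[OF L D] L D detL detR by simp
  also have "\<dots> = det C1 * det C4"
    unfolding Cblock by (rule det_four_block_mat_upper_right_zero) (auto simp: C1_def C3_def C4_def)
  also have "det C1 = (a-b)^g" by (simp add: C1_def)
  finally show ?thesis unfolding D_def C4_def N_def .
qed




definition delc :: "nat \<Rightarrow> 'a list \<Rightarrow> 'a list" where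
  "delc j r = take j r @ drop (Suc j) r"

fun ldet :: "'a::comm_ring_1 list list \<Rightarrow> 'a" where
  "ldet [] = 1"
| "ldet (r # rs) = sum_list (map (\<lambda>j. (-1)^j * r!j * ldet (map (delc j) rs)) [0..<length r])"

definition ldrow :: "nat \<Rightarrow> 'a::comm_ring_1 list \<Rightarrow> 'a list list \<Rightarrow> 'a" where
  "ldrow j as rs = sum_list (map (\<lambda>i. (-1)^(i+j) * as!i * ldet (map (delc (i+j)) rs)) [0..<length as])"

lemma ldet_Cons: "ldet (r # rs) = ldrow 0 r rs"
  by (simp add: ldrow_def)

lemma ldrow_Nil: "ldrow j [] rs = 0" by (simp add: ldrow_def)

lemma ldrow_Cons: "ldrow j (a # as) rs = (-1)^j * a * ldet (map (delc j) rs) + ldrow (Suc j) as rs"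
proof -
  have "[0..<length (a#as)] = 0 # map Suc [0..<length as]" by (simp only: map_Suc_upt length_Cons upt_conv_Cons zero_less_Suc)
  then show ?thesis by (simp add: ldrow_def o_def)
qed

lemmas ldet_eval = ldet.simps(1) ldet_Cons ldrow_Nil ldrow_Cons


lemma det_mat_Suc:
  "det (mat (Suc m) (Suc m) f) = (\<Sum>j<Suc m. (-1)^j * f(0,j) *
      det (mat m m (\<lambda>(a,b). f (Suc a, if b < j then b else Suc b))))"
proof -
  have "det (mat (Suc m) (Suc m) f) = (\<Sum>j<Suc m. mat (Suc m) (Suc m) f $$ (0,j) * cofactor (mat (Suc m) (Suc m) f) 0 j)"
    by (rule laplace_expansion_row) auto
  also have "\<dots> = (\<Sum>j<Suc m. (-1)^j * f(0,j) *
      det (mat m m (\<lambda>(a,b). f (Suc a, if b < j then b else Suc b))))"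
  proof (rule sum.cong)
    fix j assume j: "j \<in> {..<Suc m}"
    have "mat m m (\<lambda>(i',j'). mat (Suc m) (Suc m) f $$ (Suc i', if j' < j then j' else Suc j'))
       = mat m m (\<lambda>(a,b). f (Suc a, if b < j then b else Suc b))"
      by (rule eq_matI) auto
    then show "mat (Suc m) (Suc m) f $$ (0,j) * cofactor (mat (Suc m) (Suc m) f) 0 j = (-1)^j * f(0,j) *
      det (mat m m (\<lambda>(a,b). f (Suc a, if b < j then b else Suc b)))"
      using j by (simp add: cofactor_def mat_delete_def)
  qed simp
  finally show ?thesis .
qed

lemma det_mat_0: "det (mat 0 0 f) = 1"
  by (simp add: det_def)

lemma delc_map:
  assumes "j < Suc m"
  shows "delc j (map (\<lambda>b. h b) [0..<Suc m]) = map (\<lambda>b. h (if b < j then b else Suc b)) [0..<m]"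
proof (rule nth_equalityI)
  show "length (delc j (map (\<lambda>b. h b) [0..<Suc m])) = length (map (\<lambda>b. h (if b < j then b else Suc b)) [0..<m])"
    using assms by (simp add: delc_def)
  fix i assume i: "i < length (delc j (map (\<lambda>b. h b) [0..<Suc m]))"
  hence im: "i < m" using assms by (simp add: delc_def)
  show "delc j (map (\<lambda>b. h b) [0..<Suc m]) ! i = map (\<lambda>b. h (if b < j then b else Suc b)) [0..<m] ! i"
    using assms im by (cases "i < j") (simp_all add: delc_def nth_append min_def del: upt_Suc)
qed

lemma det_mat_ldet:
  "det (mat m m f) = ldet (map (\<lambda>i. map (\<lambda>j. f (i,j)) [0..<m]) [0..<m])"
proof (induction m arbitrary: f)
  case 0
  then show ?case by (simp add: det_mat_0)
next
  case (Suc m)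
  have up: "[0..<Suc m] = 0 # map Suc [0..<m]" by (simp add: map_Suc_upt upt_conv_Cons)
  have "ldet (map (\<lambda>i. map (\<lambda>j. f (i,j)) [0..<Suc m]) [0..<Suc m])
      = sum_list (map (\<lambda>j. (-1)^j * f (0,j) * ldet (map (delc j) (map (\<lambda>i. map (\<lambda>j. f (Suc i,j)) [0..<Suc m]) [0..<m]))) [0..<Suc m])"
  proof -
    have "map (\<lambda>i. map (\<lambda>j. f (i,j)) [0..<Suc m]) [0..<Suc m] = map (\<lambda>j. f (0,j)) [0..<Suc m] # map (\<lambda>i. map (\<lambda>j. f (Suc i,j)) [0..<Suc m]) [0..<m]"
      by (simp only: up list.map map_map o_def)
    then have "ldet (map (\<lambda>i. map (\<lambda>j. f (i,j)) [0..<Suc m]) [0..<Suc m]) = sum_list (map (\<lambda>j. (-1)^j * map (\<lambda>j. f (0,j)) [0..<Suc m] ! j * ldet (map (delc j) (map (\<lambda>i. map (\<lambda>j. f (Suc i,j)) [0..<Suc m]) [0..<m]))) [0..<Suc m])"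
      by (simp only: ldet.simps length_map length_upt diff_zero)
    also have "\<dots> = sum_list (map (\<lambda>j. (-1)^j * f (0,j) * ldet (map (delc j) (map (\<lambda>i. map (\<lambda>j. f (Suc i,j)) [0..<Suc m]) [0..<m]))) [0..<Suc m])"
      by (intro arg_cong[where f=sum_list] map_cong) (auto simp del: upt_Suc)
    finally show ?thesis .
  qed
  also have "\<dots> = (\<Sum>j<Suc m. (-1)^j * f (0,j) * ldet (map (delc j) (map (\<lambda>i. map (\<lambda>j. f (Suc i,j)) [0..<Suc m]) [0..<m])))"
    by (simp only: sum_set_upt_conv_sum_list_nat[symmetric] atLeast0LessThan set_upt)
  also have "\<dots> = (\<Sum>j<Suc m. (-1)^j * f(0,j) *
      det (mat m m (\<lambda>(a,b). f (Suc a, if b < j then b else Suc b))))"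
  proof (rule sum.cong)
    fix j assume j: "j \<in> {..<Suc m}"
    have "map (delc j) (map (\<lambda>i. map (\<lambda>j. f (Suc i,j)) [0..<Suc m]) [0..<m])
        = map (\<lambda>i. map (\<lambda>b. (\<lambda>(a,b). f (Suc a, if b < j then b else Suc b)) (i,b)) [0..<m]) [0..<m]"
    proof -
      have j': "j < Suc m" using j by simp
      have "map (delc j) (map (\<lambda>i. map (\<lambda>j. f (Suc i,j)) [0..<Suc m]) [0..<m]) = map (\<lambda>i. delc j (map (\<lambda>b. f (Suc i,b)) [0..<Suc m])) [0..<m]"
        by (simp only: map_map o_def)
      also have "\<dots> = map (\<lambda>i. map (\<lambda>b. f (Suc i, if b < j then b else Suc b)) [0..<m]) [0..<m]"
        by (rule map_cong[OF refl], rule delc_map[OF j'])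
      finally show ?thesis by (simp only: split_conv)
    qed
    then show "(-1)^j * f (0,j) * ldet (map (delc j) (map (\<lambda>i. map (\<lambda>j. f (Suc i,j)) [0..<Suc m]) [0..<m])) =
      (-1)^j * f(0,j) * det (mat m m (\<lambda>(a,b). f (Suc a, if b < j then b else Suc b)))"
      by (simp only: Suc.IH)
  qed simp
  also have "\<dots> = det (mat (Suc m) (Suc m) f)" by (rule det_mat_Suc[symmetric])
  finally show ?case by simp
qed

lemma ldet_K1:
  "ldet [[x-1, -2, -3, -3*k, -2, -3],
 [-2, x-1, -2, -2*k, -2, -2],
 [-3, -2, x-1, -2*k, -3, -2],
 [-3, -2, -2, x+1-2*k, -3, -3],
 [-2, -2, -3, -3*k, x-2, -3],
 [-3, -2, -2, -3*k, -3, x-(2::real)]] = 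
  (let n = k + 4 in x^6-2*(n-1)*x^5-3*(7*n-12)*x^4-18*(3*n-7)*x^3-5*(9*n-22)*x^2-(13*n-28)*x-(n-1))"
  apply (simp only: ldet_eval delc_def take.simps drop.simps list.map append.simps nat.case Let_def)
  apply (simp only: power_0 power_Suc mult_1 mult_1_right mult_minus_left mult_minus_right minus_minus add_0_right)
  apply (simp add: algebra_simps power2_eq_square power3_eq_cube numeral_eq_Suc)
  done

lemma ldet_K2: "ldet [[x-1,-2,-3,-3,-3*k,-2,-4],
 [-2,x-1,-2,-2,-2*k,-2,-3],
 [-3,-2,x-1,-2,-2*k,-3,-2],
 [-3,-2,-2,x-1,-2*k,-3,-2],
 [-3,-2,-2,-2,x+1-2*k,-3,-3],
 [-2,-2,-3,-3,-3*k,x-2,-4],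
 [-4,-3,-2,-2,-3*k,-4,x-(2::real)]] = 
  (x+1)*(let n = k + 5 in x^6-2*(n-1)*x^5-(21*n-22)*x^4-(62*n-141)*x^3-(53*n-133)*x^2-(15*n-34)*x-(n-1))"
  apply (simp only: ldet_eval delc_def take.simps drop.simps list.map append.simps nat.case Let_def)
  apply (simp only: power_0 power_Suc mult_1 mult_1_right mult_minus_left mult_minus_right minus_minus add_0_right)
  apply (simp add: algebra_simps power2_eq_square power3_eq_cube numeral_eq_Suc)
  done




definition pi_perm :: "nat \<Rightarrow> nat \<Rightarrow> nat \<Rightarrow> nat" where
  "pi_perm c g t = (if t < g then t + c else if t < g + c then t - g else t)"

lemma pi_perm_permutes:
  assumes "g + c \<le> N"
  shows "pi_perm c g permutes {0..<N}"
proof (rule bij_imp_permutes)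
  define s where "s = (\<lambda>u. if u < c then u + g else if u < g + c then u - c else u)"
  show "bij_betw (pi_perm c g) {0..<N} {0..<N}"
    by (rule bij_betw_byWitness[where f'=s]) (use assms in \<open>auto simp: s_def pi_perm_def\<close>)
  show "\<And>x. x \<notin> {0..<N} \<Longrightarrow> pi_perm c g x = x" using assms by (auto simp: pi_perm_def)
qed

lemma B1_nth:
  assumes "i < g + 6"
  shows "B1_list (g+5) ! i = (if i < g+4 then tree_edge (i+1) else if i = g+4 then {0,2} else {1,3})"
proof -
  have len: "length (map tree_edge [1..<g+5]) = g+4" by simp
  show ?thesis using assms unfolding B1_list_def by (auto simp: nth_append len)
qed

lemma B1_len: "length (B1_list n) = n + 1" if "n \<ge> 1" using that by (simp add: B1_list_def)

lemma tree_edge_pair: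
  assumes "1 \<le> j" "j < n" "3 \<le> n"
  shows "\<exists>p q. tree_edge j = {p,q} \<and> p \<noteq> q \<and> p < n \<and> q < n"
proof -
  consider "j = 1" | "j = 2" | "j \<noteq> 1 \<and> j \<noteq> 2" by blast
  then show ?thesis
  proof cases
    case 1 then show ?thesis using assms by (intro exI[of _ 0] exI[of _ 1]) (auto simp: tree_edge_def)
  next
    case 2 then show ?thesis using assms by (intro exI[of _ 1] exI[of _ 2]) (auto simp: tree_edge_def)
  next
    case 3 then show ?thesis using assms by (intro exI[of _ 2] exI[of _ j]) (auto simp: tree_edge_def)
  qed
qed

lemma B1_pair:
  assumes "i < g + 6"
  shows "\<exists>p q. B1_list (g+5) ! i = {p,q} \<and> p \<noteq> q \<and> p < g+5 \<and> q < g+5"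
proof -
  consider "i < g + 4" | "i = g + 4" | "i = g + 5" using assms by linarith
  then show ?thesis
  proof cases
    case 1 then show ?thesis using B1_nth[OF assms] tree_edge_pair[of "i+1" "g+5"] by auto
  next
    case 2 then show ?thesis using B1_nth[OF assms] by (intro exI[of _ 0] exI[of _ 2]) auto
  next
    case 3 then show ?thesis using B1_nth[OF assms] by (intro exI[of _ 1] exI[of _ 3]) auto
  qed
qed

lemma steiner_pair:
  assumes "3 \<le> n" "\<exists>p q. P = {p,q} \<and> p \<noteq> q \<and> p < n \<and> q < n" "\<exists>p q. Q = {p,q} \<and> p \<noteq> q \<and> p < n \<and> q < n"
  shows "steiner2 (S1 n) P Q = sc (P \<union> Q)"
proof -
  obtain p q where pq: "P = {p,q}" "p \<noteq> q" "p < n" "q < n" using assms(2) by blast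
  obtain p' q' where pq': "Q = {p',q'}" "p' < n" "q' < n" using assms(3) by blast
  have "P \<union> Q \<subseteq> {0..<n}" using pq pq' by auto
  moreover have "p \<in> P \<union> Q" "q \<in> P \<union> Q" using pq by auto
  ultimately show ?thesis unfolding steiner2_def using steiner_S1[OF assms(1), of "P \<union> Q" p q] pq(2) by blast
qed

definition D1 :: "nat \<Rightarrow> real \<Rightarrow> nat \<Rightarrow> nat \<Rightarrow> real" where
  "D1 g x i j = (if i = j then x else 0) - real (sc (B1_list (g+5) ! i \<union> B1_list (g+5) ! j))"

lemma poly_char_B1:
  "poly (char_poly (steiner2_submatrix (S1 (g+5)) (B1_list (g+5)))) x = det (mat (g+6) (g+6) (\<lambda>(i,j). D1 g x i j))"
proof -
  let ?A = "steiner2_submatrix (S1 (g+5)) (B1_list (g+5))"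
  have len: "length (B1_list (g+5)) = g + 6" by (simp add: B1_list_def)
  have A: "?A \<in> carrier_mat (g+6) (g+6)" unfolding steiner2_submatrix_def len by simp
  have Aij: "?A $$ (i,j) = real (sc (B1_list (g+5) ! i \<union> B1_list (g+5) ! j))" if "i < g+6" "j < g+6" for i j
    using that steiner_pair[of "g+5", OF _ B1_pair[OF that(1)] B1_pair[OF that(2)]]
    unfolding steiner2_submatrix_def len by simp
  show ?thesis unfolding char_poly_def
  proof (rule poly_det_cong[of _ "g+6"])
    show "mat (g+6) (g+6) (\<lambda>(i,j). D1 g x i j) \<in> carrier_mat (g+6) (g+6)" by simp
    show "char_poly_matrix ?A \<in> carrier_mat (g+6) (g+6)" using A by simp
    fix i j assume ij: "i < g+6" "j < g+6"
    show "poly (char_poly_matrix ?A $$ (i,j)) x = mat (g+6) (g+6) (\<lambda>(i,j). D1 g x i j) $$ (i,j)"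
      using ij A Aij[OF ij] by (simp add: char_poly_matrix_def D1_def)
  qed
qed


lemma sc_simps: "sc U = (if 0 \<in> U then 1 else 0) + (if (0 \<in> U \<or> 1 \<in> U) \<and> (\<exists>v\<in>U. 2 \<le> v) then 1 else 0)
          + card (U \<inter> {3..})" by (simp add: sc_def)

lemma det_B1_reduce:
  "det (mat (g+6) (g+6) (\<lambda>(i,j). D1 g x i j)) = (x+1)^g *
    det (mat 6 6 (\<lambda>(t,u). if u = 3 then (if t = 3 then (x-1) + of_nat g * (-2) else (of_nat g + 1) * D1 g x (pi_perm 4 g (g+t)) (pi_perm 4 g (g+3)))
       else D1 g x (pi_perm 4 g (g+t)) (pi_perm 4 g (g+u))))"
proof -
  let ?p = "pi_perm 4 g"
  have "det (mat (g+6) (g+6) (\<lambda>(i,j). D1 g x i j)) = det (mat (g+6) (g+6) (\<lambda>(i,j). D1 g x (?p i) (?p j)))"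
    by (rule det_perm_sim[symmetric]) (rule pi_perm_permutes, simp)
  also have "\<dots> = ((x-1) - (-2))^g * det (mat 6 6 (\<lambda>(t,u). if u = 3 then (if t = 3 then (x-1) + of_nat g * (-2) else (of_nat g + 1) * D1 g x (?p (g+t)) (?p (g+3)))
       else D1 g x (?p (g+t)) (?p (g+u))))"
  proof (rule reduce_generic[where d = "\<lambda>i j. D1 g x (?p i) (?p j)"])
    show "3 < (6::nat)" by simp
    fix t assume t: "t < g"
    show "D1 g x (?p t) (?p (g+3)) = -2" using t by (simp add: pi_perm_def D1_def B1_nth tree_edge_def sc_def)
    show "D1 g x (?p (g+3)) (?p t) = -2" using t by (simp add: pi_perm_def D1_def B1_nth tree_edge_def sc_def)
    {
      fix u assume u: "u < g"
      show "D1 g x (?p t) (?p u) = (if t = u then x - 1 else -2)" using t u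
        by (simp add: pi_perm_def D1_def B1_nth tree_edge_def sc_def)
    }
    fix u :: nat assume u: "u < 6" "u \<noteq> 3"
    then consider "u = 0" | "u = 1" | "u = 2" | "u = 4" | "u = 5" by linarith
    then show "D1 g x (?p t) (?p (g+u)) = D1 g x (?p (g+3)) (?p (g+u))"
      using t by cases (simp_all add: pi_perm_def D1_def B1_nth tree_edge_def sc_def)
    from u consider "u = 0" | "u = 1" | "u = 2" | "u = 4" | "u = 5" by linarith
    then show "D1 g x (?p (g+u)) (?p t) = D1 g x (?p (g+u)) (?p (g+3))"
      using t by cases (simp_all add: pi_perm_def D1_def B1_nth tree_edge_def sc_def)
  next
    show "D1 g x (?p (g+3)) (?p (g+3)) = x - 1" by (simp add: pi_perm_def D1_def B1_nth tree_edge_def sc_def)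
  qed
  also have "(x - 1) - (-2) = x + (1::real)" by simp
  finally show ?thesis .
qed


lemma upt6: "[0..<6] = [0::nat,1,2,3,4,5]" by (simp add: upt_rec)
lemma upt7: "[0..<7] = [0::nat,1,2,3,4,5,6]" by (simp add: upt_rec)

lemma det_K1_list:
  "det (mat 6 6 (\<lambda>(t,u). if u = 3 then (if t = 3 then (x-1) + of_nat g * (-2) else (of_nat g + 1) * D1 g x (pi_perm 4 g (g+t)) (pi_perm 4 g (g+3)))
       else D1 g x (pi_perm 4 g (g+t)) (pi_perm 4 g (g+u)))) =
   ldet [[x-1, -2, -3, -3*(real g + 1), -2, -3],
 [-2, x-1, -2, -2*(real g + 1), -2, -2],
 [-3, -2, x-1, -2*(real g + 1), -3, -2],
 [-3, -2, -2, x+1-2*(real g + 1), -3, -3],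
 [-2, -2, -3, -3*(real g + 1), x-2, -3],
 [-3, -2, -2, -3*(real g + 1), -3, x-(2::real)]]"
  unfolding det_mat_ldet upt6
  by (rule arg_cong[where f=ldet]) (simp add: pi_perm_def D1_def B1_nth tree_edge_def sc_def algebra_simps numeral_3_eq_3[symmetric])

lemma poly_h1: "poly (h1 (g+5)) x = (let n = (real g + 1) + 4 in x^6-2*(n-1)*x^5-3*(7*n-12)*x^4-18*(3*n-7)*x^3-5*(9*n-22)*x^2-(13*n-28)*x-(n-1))"
  by (simp add: h1_def Let_def algebra_simps power2_eq_square power3_eq_cube numeral_eq_Suc)

lemma det_B1: "det (mat (g+6) (g+6) (\<lambda>(i,j). D1 g x i j)) = (x+1)^g * poly (h1 (g+5)) x"
  unfolding det_B1_reduce det_K1_list ldet_K1 poly_h1 ..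




lemma B2_nth:
  assumes "i < n + 1" "1 \<le> n"
  shows "B2_list n ! i = (if i < n - 1 then tree_edge (i+1) else if i = n - 1 then {0,2} else {3,4})"
proof -
  have len: "length (map tree_edge [1..<n]) = n - 1" by simp
  show ?thesis using assms unfolding B2_list_def by (auto simp: nth_append len)
qed

lemma B2_pair:
  assumes "i < n + 1" "5 \<le> n"
  shows "\<exists>p q. B2_list n ! i = {p,q} \<and> p \<noteq> q \<and> p < n \<and> q < n"
proof -
  have n1: "1 \<le> n" using assms by simp
  consider "i < n - 1" | "i = n - 1" | "i = n" using assms by linarith
  then show ?thesis
  proof cases
    case 1 then show ?thesis using B2_nth[OF assms(1) n1] tree_edge_pair[of "i+1" n] assms by auto
  next
    case 2 then show ?thesis using B2_nth[OF assms(1) n1] assms by (intro exI[of _ 0] exI[of _ 2]) auto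
  next
    case 3 then show ?thesis using B2_nth[OF assms(1) n1] assms by (intro exI[of _ 3] exI[of _ 4]) auto
  qed
qed

definition D2 :: "nat \<Rightarrow> real \<Rightarrow> nat \<Rightarrow> nat \<Rightarrow> real" where
  "D2 n x i j = (if i = j then x else 0) - real (sc (B2_list n ! i \<union> B2_list n ! j))"

lemma poly_char_B2:
  assumes n: "5 \<le> n"
  shows "poly (char_poly (steiner2_submatrix (S1 n) (B2_list n))) x = det (mat (n+1) (n+1) (\<lambda>(i,j). D2 n x i j))"
proof -
  let ?A = "steiner2_submatrix (S1 n) (B2_list n)"
  have len: "length (B2_list n) = n + 1" using n by (simp add: B2_list_def)
  have A: "?A \<in> carrier_mat (n+1) (n+1)" unfolding steiner2_submatrix_def len by simp
  have Aij: "?A $$ (i,j) = real (sc (B2_list n ! i \<union> B2_list n ! j))" if "i < n+1" "j < n+1" for i j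
    using that n steiner_pair[of n, OF _ B2_pair[OF that(1) n] B2_pair[OF that(2) n]]
    unfolding steiner2_submatrix_def len by simp
  show ?thesis unfolding char_poly_def
  proof (rule poly_det_cong[of _ "n+1"])
    show "mat (n+1) (n+1) (\<lambda>(i,j). D2 n x i j) \<in> carrier_mat (n+1) (n+1)" by simp
    show "char_poly_matrix ?A \<in> carrier_mat (n+1) (n+1)" using A by simp
    fix i j assume ij: "i < n+1" "j < n+1"
    show "poly (char_poly_matrix ?A $$ (i,j)) x = mat (n+1) (n+1) (\<lambda>(i,j). D2 n x i j) $$ (i,j)"
      using ij A Aij[OF ij] by (simp add: char_poly_matrix_def D2_def)
  qed
qed

lemma det_B2_reduce:
  "det (mat (g+7) (g+7) (\<lambda>(i,j). D2 (g+6) x i j)) = (x+1)^g *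
    det (mat 7 7 (\<lambda>(t,u). if u = 4 then (if t = 4 then (x-1) + of_nat g * (-2) else (of_nat g + 1) * D2 (g+6) x (pi_perm 5 g (g+t)) (pi_perm 5 g (g+4)))
       else D2 (g+6) x (pi_perm 5 g (g+t)) (pi_perm 5 g (g+u))))"
proof -
  let ?p = "pi_perm 5 g"
  have "det (mat (g+7) (g+7) (\<lambda>(i,j). D2 (g+6) x i j)) = det (mat (g+7) (g+7) (\<lambda>(i,j). D2 (g+6) x (?p i) (?p j)))"
    by (rule det_perm_sim[symmetric]) (rule pi_perm_permutes, simp)
  also have "\<dots> = ((x-1) - (-2))^g * det (mat 7 7 (\<lambda>(t,u). if u = 4 then (if t = 4 then (x-1) + of_nat g * (-2) else (of_nat g + 1) * D2 (g+6) x (?p (g+t)) (?p (g+4)))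
       else D2 (g+6) x (?p (g+t)) (?p (g+u))))"
  proof (rule reduce_generic[where d = "\<lambda>i j. D2 (g+6) x (?p i) (?p j)"])
    show "4 < (7::nat)" by simp
    fix t assume t: "t < g"
    show "D2 (g+6) x (?p t) (?p (g+4)) = -2" using t by (simp add: pi_perm_def D2_def B2_nth tree_edge_def sc_def)
    show "D2 (g+6) x (?p (g+4)) (?p t) = -2" using t by (simp add: pi_perm_def D2_def B2_nth tree_edge_def sc_def)
    {
      fix u assume u: "u < g"
      show "D2 (g+6) x (?p t) (?p u) = (if t = u then x - 1 else -2)" using t u
        by (simp add: pi_perm_def D2_def B2_nth tree_edge_def sc_def)
    }
    fix u :: nat assume u: "u < 7" "u \<noteq> 4"
    then consider "u = 0" | "u = 1" | "u = 2" | "u = 3" | "u = 5" | "u = 6" by linarith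
    then show "D2 (g+6) x (?p t) (?p (g+u)) = D2 (g+6) x (?p (g+4)) (?p (g+u))"
      using t by cases (simp_all add: pi_perm_def D2_def B2_nth tree_edge_def sc_def card_insert_if)
    from u consider "u = 0" | "u = 1" | "u = 2" | "u = 3" | "u = 5" | "u = 6" by linarith
    then show "D2 (g+6) x (?p (g+u)) (?p t) = D2 (g+6) x (?p (g+u)) (?p (g+4))"
      using t by cases (simp_all add: pi_perm_def D2_def B2_nth tree_edge_def sc_def card_insert_if)
  next
    show "D2 (g+6) x (?p (g+4)) (?p (g+4)) = x - 1" by (simp add: pi_perm_def D2_def B2_nth tree_edge_def sc_def)
  qed
  also have "(x - 1) - (-2) = x + (1::real)" by simp
  finally show ?thesis .
qed

lemma det_K2_list:
  "det (mat 7 7 (\<lambda>(t,u). if u = 4 then (if t = 4 then (x-1) + of_nat g * (-2) else (of_nat g + 1) * D2 (g+6) x (pi_perm 5 g (g+t)) (pi_perm 5 g (g+4)))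
       else D2 (g+6) x (pi_perm 5 g (g+t)) (pi_perm 5 g (g+u)))) =
   ldet [[x-1,-2,-3,-3,-3*(real g + 1),-2,-4],
 [-2,x-1,-2,-2,-2*(real g + 1),-2,-3],
 [-3,-2,x-1,-2,-2*(real g + 1),-3,-2],
 [-3,-2,-2,x-1,-2*(real g + 1),-3,-2],
 [-3,-2,-2,-2,x+1-2*(real g + 1),-3,-3],
 [-2,-2,-3,-3,-3*(real g + 1),x-2,-4],
 [-4,-3,-2,-2,-3*(real g + 1),-4,x-(2::real)]]"
  unfolding det_mat_ldet upt7
  by (rule arg_cong[where f=ldet]) (simp add: pi_perm_def D2_def B2_nth tree_edge_def sc_def algebra_simps numeral_3_eq_3[symmetric] card_insert_if)

lemma poly_h2: "poly (h2 (g+6)) x = (let n = (real g + 1) + 5 in x^6-2*(n-1)*x^5-(21*n-22)*x^4-(62*n-141)*x^3-(53*n-133)*x^2-(15*n-34)*x-(n-1))"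
  by (simp add: h2_def Let_def algebra_simps power2_eq_square power3_eq_cube numeral_eq_Suc)

lemma det_B2: "det (mat (g+7) (g+7) (\<lambda>(i,j). D2 (g+6) x i j)) = (x+1)^(g+1) * poly (h2 (g+6)) x"
  unfolding det_B2_reduce det_K2_list ldet_K2 poly_h2 by simp

lemma ldet_K0: "ldet [[x-1,-2,-3,-3,-2,-4],
 [-2,x-1,-2,-2,-2,-3],
 [-3,-2,x-1,-2,-3,-2],
 [-3,-2,-2,x-1,-3,-2],
 [-2,-2,-3,-3,x-2,-4],
 [-4,-3,-2,-2,-4,x-(2::real)]] = poly (h2 5) x"
  apply (simp only: ldet_eval delc_def take.simps drop.simps list.map append.simps nat.case)
  apply (simp only: power_0 power_Suc mult_1 mult_1_right mult_minus_left mult_minus_right minus_minus add_0_right)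
  apply (simp add: h2_def algebra_simps power2_eq_square power3_eq_cube numeral_eq_Suc)
  done

lemma det_B2_5: "det (mat 6 6 (\<lambda>(i,j). D2 5 x i j)) = poly (h2 5) x"
proof -
  have "det (mat 6 6 (\<lambda>(i,j). D2 5 x i j)) = ldet [[x-1,-2,-3,-3,-2,-4],
 [-2,x-1,-2,-2,-2,-3],
 [-3,-2,x-1,-2,-3,-2],
 [-3,-2,-2,x-1,-3,-2],
 [-2,-2,-3,-3,x-2,-4],
 [-4,-3,-2,-2,-4,x-(2::real)]]"
    unfolding det_mat_ldet upt6
    by (rule arg_cong[where f=ldet]) (simp add: D2_def B2_nth tree_edge_def sc_def algebra_simps numeral_3_eq_3[symmetric] card_insert_if)
  then show ?thesis using ldet_K0 by simp
qed




theorem theorem5p5: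
  fixes n :: nat
  assumes "n \<ge> 5"
  shows "char_poly (steiner2_submatrix (S1 n) (B1_list n)) = [:1, 1:] ^ (n - 5) * h1 n
       \<and> char_poly (steiner2_submatrix (S1 n) (B2_list n)) = [:1, 1:] ^ (n - 5) * h2 n"
proof
  obtain g where g: "n = g + 5" using assms by (metis le_add_diff_inverse2)
  show "char_poly (steiner2_submatrix (S1 n) (B1_list n)) = [:1, 1:] ^ (n - 5) * h1 n"
  proof (rule poly_eq_poly_eq_iff[THEN iffD1], rule ext)
    fix x :: real
    have "poly (char_poly (steiner2_submatrix (S1 n) (B1_list n))) x = (x+1)^g * poly (h1 n) x"
      unfolding g poly_char_B1 det_B1 ..
    also have "\<dots> = poly ([:1, 1:] ^ (n - 5) * h1 n) x" using g by (simp add: add.commute)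
    finally show "poly (char_poly (steiner2_submatrix (S1 n) (B1_list n))) x = poly ([:1, 1:] ^ (n - 5) * h1 n) x" .
  qed
  show "char_poly (steiner2_submatrix (S1 n) (B2_list n)) = [:1, 1:] ^ (n - 5) * h2 n"
  proof (rule poly_eq_poly_eq_iff[THEN iffD1], rule ext)
    fix x :: real
    have "poly (char_poly (steiner2_submatrix (S1 n) (B2_list n))) x = (x+1)^(n-5) * poly (h2 n) x"
    proof (cases "n = 5")
      case True
      have "poly (char_poly (steiner2_submatrix (S1 n) (B2_list n))) x = det (mat (5+1) (5+1) (\<lambda>(i,j). D2 5 x i j))"
        using poly_char_B2[of 5 x] True by simp
      also have "\<dots> = poly (h2 5) x" using det_B2_5 by simp
      finally show ?thesis using True by simp
    next
      case False
      have "6 \<le> n" using assms False by simp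
      then obtain h where h: "n = h + 6" by (metis le_add_diff_inverse2)
      have "poly (char_poly (steiner2_submatrix (S1 n) (B2_list n))) x = det (mat (h+6+1) (h+6+1) (\<lambda>(i,j). D2 (h+6) x i j))"
        using poly_char_B2[of n x] assms h by simp
      also have "h + 6 + 1 = h + 7" by simp
      also have "det (mat (h+7) (h+7) (\<lambda>(i,j). D2 (h+6) x i j)) = (x+1)^(h+1) * poly (h2 (h+6)) x" by (rule det_B2)
      finally show ?thesis using h by simp
    qed
    also have "\<dots> = poly ([:1, 1:] ^ (n - 5) * h2 n) x" by (simp add: add.commute)
    finally show "poly (char_poly (steiner2_submatrix (S1 n) (B2_list n))) x = poly ([:1, 1:] ^ (n - 5) * h2 n) x" .
  qed
qed


end
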